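(* Let $A\in\mathbb{R}^{n\times n}$ with $A\ge 0$, $B\in\mathbb{R}^{n\times m}$, $C\in\mathbb{R}^{p\times n}$, and let $\mathcal{X}=\{(x,\overline{x},\underline{x}) : x,\overline{x},\underline{x}\in\mathbb{R}^n_+,\ \underline{x}\le x\le \overline{x}\}$. For gains $\overline{K},\underline{K}\in\mathbb{R}^{m\times n}$, $\overline{L},\underline{L}\in\mathbb{R}^{n\times p}$ let \[ M(\overline{K},\underline{K},\overline{L},\underline{L})=\begin{bmatrix} A & B\overline{K} & B\underline{K} \\ \overline{L}C & A-\overline{L}C+B\overline{K} & B\underline{K} \\ \underline{L}C & B\overline{K} & A-\underline{L}C+B\underline{K} \end{bmatrix}. \] If there exist gains $\overline{K},\underline{K},\overline{L},\underline{L}$ with $\underline{L}C\ge0$ such that $M(\overline{K},\underline{K},\overline{L},\underline{L})$ is Schur and $\mathcal{X}$ is invariant under $z(t+1)=M(\overline{K},\underline{K},\overline{L},\underline{L})z(t)$, then there also exist such gains with $\overline{K}=0$, i.e., gains $\underline{K}',\overline{L}',\underline{L}'$ with $\underline{L}'C\ge 0$ such that $M(0,\underline{K}',\overline{L}',\underline{L}')$ is Schur and $\mathcal{X}$ is invariant under $z(t+1)=M(0,\underline{K}',\overline{L}',\underline{L}')z(t)$.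
   Context: All inequalities between matrices or vectors are element-wise; $\mathbb{R}^n_+$ is the closed nonnegative orthant. A square matrix is Schur if its spectral radius is less than $1$. $M$ is the closed-loop matrix of $x(t+1)=Ax(t)+Bu(t)$, $y(t)=Cx(t)$ with upper/lower Luenberger observers $\overline{x}(t+1)=(A-\overline{L}C)\overline{x}(t)+\overline{L}y(t)+Bu(t)$, $\underline{x}(t+1)=(A-\underline{L}C)\underline{x}(t)+\underline{L}y(t)+Bu(t)$ and feedback $u=\underline{K}\,\underline{x}+\overline{K}\,\overline{x}$. Invariance of $\mathcal{X}$ means every trajectory starting in $\mathcal{X}$ stays in $\mathcal{X}$ for all $t\ge0$. *)

theory Defs
  imports "Jordan_Normal_Form.Spectral_Radius"
begin

definition nonneg_mat :: "real mat \<Rightarrow> bool" where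
  "nonneg_mat M \<longleftrightarrow> (\<forall>i < dim_row M. \<forall>j < dim_col M. M $$ (i, j) \<ge> 0)"

definition schur :: "real mat \<Rightarrow> bool" where
  "schur M \<longleftrightarrow> spectral_radius (map_mat complex_of_real M) < 1"

definition block3 :: "nat \<Rightarrow> (nat \<Rightarrow> nat \<Rightarrow> real mat) \<Rightarrow> real mat" where
  "block3 n b = mat (3 * n) (3 * n) (\<lambda>(i, j). b (i div n) (j div n) $$ (i mod n, j mod n))"

(* closed-loop matrix M(Kbar, Kund, Lbar, Lund) acting on z = (x, xbar, xund) *)
definition closed_loop ::
  "nat \<Rightarrow> real mat \<Rightarrow> real mat \<Rightarrow> real mat \<Rightarrow> real mat \<Rightarrow> real mat \<Rightarrow> real mat \<Rightarrow> real mat \<Rightarrow> real mat" where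
  "closed_loop n A B C Kb Ku Lb Lu = block3 n (\<lambda>i j.
     if i = 0 then (if j = 0 then A else if j = 1 then B * Kb else B * Ku)
     else if i = 1 then (if j = 0 then Lb * C else if j = 1 then A - Lb * C + B * Kb else B * Ku)
     else (if j = 0 then Lu * C else if j = 1 then B * Kb else A - Lu * C + B * Ku))"

definition Xset :: "nat \<Rightarrow> real vec set" where
  "Xset n = {z. dim_vec z = 3 * n \<and>
     (\<forall>i < n. 0 \<le> z $ i \<and> 0 \<le> z $ (n + i) \<and> 0 \<le> z $ (2 * n + i) \<and>
              z $ (2 * n + i) \<le> z $ i \<and> z $ i \<le> z $ (n + i))}"

definition invariant_under :: "real mat \<Rightarrow> real vec set \<Rightarrow> bool" where
  "invariant_under M S \<longleftrightarrow> (\<forall>z \<in> S. \<forall>t::nat. (M ^\<^sub>m t) *\<^sub>v z \<in> S)"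

end

theory Submission
  imports Defs
begin

definition gblock3 :: "nat \<Rightarrow> (nat \<Rightarrow> nat \<Rightarrow> 'a mat) \<Rightarrow> 'a mat" where
  "gblock3 n b = mat (3 * n) (3 * n) (\<lambda>(i, j). b (i div n) (j div n) $$ (i mod n, j mod n))"

lemma block3_gblock3: "block3 = gblock3"
  by (intro ext, simp add: block3_def gblock3_def)

lemma sum3_split:
  fixes f :: "nat \<Rightarrow> 'a::comm_monoid_add"
  shows "sum f {0..<3*n} = sum f {0..<n} + sum (\<lambda>i. f (n + i)) {0..<n} + sum (\<lambda>i. f (2*n + i)) {0..<n}"
proof -
  have "sum f {0..<3*n} = sum f {0..<n} + sum f {n..<2*n} + sum f {2*n..<3*n}"
    by (simp add: sum.atLeastLessThan_concat)
  moreover have "sum f {n..<2*n} = sum (\<lambda>i. f (n + i)) {0..<n}"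
    using sum.shift_bounds_nat_ivl[of f 0 n n] by (simp add: add.commute mult_2)
  moreover have "sum f {2*n..<3*n} = sum (\<lambda>i. f (2*n + i)) {0..<n}"
    using sum.shift_bounds_nat_ivl[of f 0 "2*n" n] by (simp add: add.commute)
  ultimately show ?thesis by simp
qed

lemma dm0: "k < n \<Longrightarrow> k div n = 0 \<and> k mod n = (k::nat)" by simp
lemma dm1: "k < n \<Longrightarrow> (n + k) div n = 1 \<and> (n + k) mod n = (k::nat)" by simp
lemma dm2: "k < n \<Longrightarrow> (2*n + k) div n = 2 \<and> (2*n + k) mod n = (k::nat)" by simp

lemma gblock3_carrier[simp]: "gblock3 n b \<in> carrier_mat (3*n) (3*n)"
  "dim_row (gblock3 n b) = 3*n" "dim_col (gblock3 n b) = 3*n"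
  by (auto simp: gblock3_def)

lemma gblock3_index: "i < 3*n \<Longrightarrow> j < 3*n \<Longrightarrow> gblock3 n b $$ (i,j) = b (i div n) (j div n) $$ (i mod n, j mod n)"
  by (simp add: gblock3_def)

lemma div3: "i < 3*n \<Longrightarrow> i div n < (3::nat)"
  by (simp add: less_mult_imp_div_less mult.commute)

lemma gblock3_eqI:
  assumes "\<And>i j r s. i < 3 \<Longrightarrow> j < 3 \<Longrightarrow> r < n \<Longrightarrow> s < n \<Longrightarrow> X i j $$ (r,s) = Y i j $$ (r,s)"
  shows "gblock3 n X = gblock3 n Y"
proof (rule eq_matI)
  fix i j assume "i < dim_row (gblock3 n Y)" "j < dim_col (gblock3 n Y)"
  then have i: "i < 3*n" and j: "j < 3*n" by auto
  then have "n > 0" by auto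
  then show "gblock3 n X $$ (i, j) = gblock3 n Y $$ (i, j)"
    using i j assms div3[OF i] div3[OF j] by (simp add: gblock3_index)
qed auto

lemma gblock3_mult:
  assumes c: "\<And>i j. i < 3 \<Longrightarrow> j < 3 \<Longrightarrow> a i j \<in> carrier_mat n n \<and> b i j \<in> carrier_mat n n"
  shows "gblock3 n a * gblock3 n b = gblock3 n (\<lambda>i j. a i 0 * b 0 j + a i 1 * b 1 j + a i 2 * b 2 j)"
proof (rule eq_matI)
  fix i j assume "i < dim_row (gblock3 n (\<lambda>i j. a i 0 * b 0 j + a i 1 * b 1 j + a i 2 * b 2 j))"
    "j < dim_col (gblock3 n (\<lambda>i j. a i 0 * b 0 j + a i 1 * b 1 j + a i 2 * b 2 j))"
  then have i: "i < 3*n" and j: "j < 3*n" by auto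
  then have n: "n > 0" by auto
  define I where "I = i div n" define J where "J = j div n"
  define r where "r = i mod n" define s where "s = j mod n"
  have I: "I < 3" and J: "J < 3" using div3[OF i] div3[OF j] I_def J_def by auto
  have r: "r < n" and s: "s < n" using n r_def s_def by auto
  have ca: "\<And>k. k < 3 \<Longrightarrow> a I k \<in> carrier_mat n n" and cb: "\<And>k. k < 3 \<Longrightarrow> b k J \<in> carrier_mat n n"
    using c I J by auto
  have "(gblock3 n a * gblock3 n b) $$ (i,j) = (\<Sum>k\<in>{0..<3*n}. gblock3 n a $$ (i,k) * gblock3 n b $$ (k,j))"
    using i j by (simp add: scalar_prod_def)
  also have "\<dots> = (\<Sum>k\<in>{0..<n}. a I 0 $$ (r,k) * b 0 J $$ (k,s)) + (\<Sum>k\<in>{0..<n}. a I 1 $$ (r,k) * b 1 J $$ (k,s))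
      + (\<Sum>k\<in>{0..<n}. a I 2 $$ (r,k) * b 2 J $$ (k,s))"
    unfolding sum3_split using i j n
    by (simp add: gblock3_index I_def J_def r_def s_def)
  also have "\<dots> = (a I 0 * b 0 J + a I 1 * b 1 J + a I 2 * b 2 J) $$ (r,s)"
    using ca[of 0] ca[of 1] ca[of 2] cb[of 0] cb[of 1] cb[of 2] r s
    by (simp add: scalar_prod_def)
  also have "\<dots> = gblock3 n (\<lambda>i j. a i 0 * b 0 j + a i 1 * b 1 j + a i 2 * b 2 j) $$ (i,j)"
    using i j by (simp add: gblock3_index I_def J_def r_def s_def)
  finally show "(gblock3 n a * gblock3 n b) $$ (i,j) = gblock3 n (\<lambda>i j. a i 0 * b 0 j + a i 1 * b 1 j + a i 2 * b 2 j) $$ (i,j)" .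
qed auto

lemma gblock3_one: "gblock3 n (\<lambda>i j. if i = j then 1\<^sub>m n else 0\<^sub>m n n) = (1\<^sub>m (3*n) :: 'a::comm_ring_1 mat)"
proof (rule eq_matI)
  fix i j assume "i < dim_row (1\<^sub>m (3*n) :: 'a mat)" "j < dim_col (1\<^sub>m (3*n) :: 'a mat)"
  then have i: "i < 3*n" and j: "j < 3*n" by auto
  then have n: "n > 0" by auto
  have eq: "i = j \<longleftrightarrow> (i div n = j div n \<and> i mod n = j mod n)"
    by (metis div_mult_mod_eq)
  show "gblock3 n (\<lambda>i j. if i = j then 1\<^sub>m n else 0\<^sub>m n n) $$ (i, j) = (1\<^sub>m (3*n) :: 'a mat) $$ (i, j)"
    using i j n eq by (simp add: gblock3_index)
qed auto

lemma det_gblock3_tri: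
  fixes T :: "nat \<Rightarrow> nat \<Rightarrow> 'a::idom mat"
  assumes c: "\<And>i j. i < 3 \<Longrightarrow> j < 3 \<Longrightarrow> T i j \<in> carrier_mat n n"
    and z: "T 1 0 = 0\<^sub>m n n" "T 2 0 = 0\<^sub>m n n" "T 2 1 = 0\<^sub>m n n"
  shows "det (gblock3 n T) = det (T 0 0) * det (T 1 1) * det (T 2 2)"
proof -
  define U where "U = mat n (2*n) (\<lambda>(r,s). if s < n then T 0 1 $$ (r,s) else T 0 2 $$ (r, s - n))"
  define L where "L = four_block_mat (T 1 1) (T 1 2) (0\<^sub>m n n) (T 2 2)"
  have c00: "T 0 0 \<in> carrier_mat n n" and c01: "T 0 1 \<in> carrier_mat n n" and c02: "T 0 2 \<in> carrier_mat n n"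
   and c11: "T 1 1 \<in> carrier_mat n n" and c12: "T 1 2 \<in> carrier_mat n n" and c22: "T 2 2 \<in> carrier_mat n n"
    using c by auto
  have L: "L \<in> carrier_mat (2*n) (2*n)" unfolding L_def using c11 c22 by (auto simp: mult_2)
  have U: "U \<in> carrier_mat n (2*n)" unfolding U_def by auto
  have eq: "gblock3 n T = four_block_mat (T 0 0) U (0\<^sub>m (2*n) n) L"
  proof (rule eq_matI)
    fix i j assume "i < dim_row (four_block_mat (T 0 0) U (0\<^sub>m (2*n) n) L)"
      "j < dim_col (four_block_mat (T 0 0) U (0\<^sub>m (2*n) n) L)"
    then have i: "i < 3*n" and j: "j < 3*n" using c00 L by auto
    consider "i < n" | "n \<le> i" "i < 2*n" | "2*n \<le> i" "i < 3*n" using i by linarith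
    note ci = this
    consider "j < n" | "n \<le> j" "j < 2*n" | "2*n \<le> j" "j < 3*n" using j by linarith
    note cj = this
    have d1: "n \<le> x \<Longrightarrow> x < 2*n \<Longrightarrow> x div n = 1 \<and> x mod n = x - n" for x
      using dm1[of "x - n" n] by auto
    have d2: "2*n \<le> x \<Longrightarrow> x < 3*n \<Longrightarrow> x div n = 2 \<and> x mod n = x - 2*n" for x
      using dm2[of "x - 2*n" n] by auto
    have Ld: "dim_row L = 2*n" "dim_col L = 2*n" using L by auto
    have fb: "four_block_mat (T 0 0) U (0\<^sub>m (2*n) n) L $$ (i, j) =
      (if i < n then if j < n then T 0 0 $$ (i,j) else U $$ (i, j - n)
       else if j < n then 0 else L $$ (i - n, j - n))"
      using i j c00 Ld by (subst index_mat_four_block) auto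
    have Lij: "L $$ (i', j') = (if i' < n then if j' < n then T 1 1 $$ (i',j') else T 1 2 $$ (i', j' - n)
       else if j' < n then 0 else T 2 2 $$ (i' - n, j' - n))" if "i' < 2*n" "j' < 2*n" for i' j'
      unfolding L_def using that c11 c22 by (subst index_mat_four_block) auto
    have Uij: "U $$ (i', j') = (if j' < n then T 0 1 $$ (i',j') else T 0 2 $$ (i', j' - n))"
      if "i' < n" "j' < 2*n" for i' j'
      unfolding U_def using that by simp
    have gb: "gblock3 n T $$ (i, j) = T (i div n) (j div n) $$ (i mod n, j mod n)"
      using i j by (rule gblock3_index)
    have npos: "n > 0" using i by auto
    have ar: "j - n < n \<longleftrightarrow> j < 2*n" "i - n < n \<longleftrightarrow> i < 2*n" "j - n - n = j - 2*n" "i - n - n = i - 2*n"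
      "i - n < 2*n" "j - n < 2*n"
      using npos i j by arith+
    have key: "T (i div n) (j div n) $$ (i mod n, j mod n) = (if i < n then if j < n then T 0 0 $$ (i,j) else U $$ (i, j - n)
       else if j < n then 0 else L $$ (i - n, j - n))"
    proof (cases rule: ci)
      case 1
      then show ?thesis
      proof (cases rule: cj)
        case 1 then show ?thesis using \<open>i < n\<close> using ar by simp
      next
        case 2 then show ?thesis using \<open>i < n\<close> d1[of j] Uij[of i "j - n"] using ar by simp
      next
        case 3 then show ?thesis using \<open>i < n\<close> d2[of j] Uij[of i "j - n"] using ar by simp
      qed
    next
      case 2
      then show ?thesis
      proof (cases rule: cj)
        case 1 then show ?thesis using 2 d1[of i] z using ar by simp
      next
        case 3 then show ?thesis using 2 d1[of i] d2[of j] Lij[of "i - n" "j - n"] using ar by simp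
      next
        case 2 then show ?thesis using \<open>n \<le> i\<close> \<open>i < 2*n\<close> d1[of i] d1[of j] Lij[of "i - n" "j - n"] using ar by simp
      qed
    next
      case 3
      then show ?thesis
      proof (cases rule: cj)
        case 1 then show ?thesis using 3 d2[of i] z using ar by simp
      next
        case 2 then show ?thesis using 3 d2[of i] d1[of j] Lij[of "i - n" "j - n"] z using ar by simp
      next
        case 3 then show ?thesis using \<open>2*n \<le> i\<close> \<open>i < 3*n\<close> d2[of i] d2[of j] Lij[of "i - n" "j - n"] using ar by simp
      qed
    qed
    then show "gblock3 n T $$ (i, j) = four_block_mat (T 0 0) U (0\<^sub>m (2*n) n) L $$ (i, j)"
      using fb gb by simp
  qed (use c00 L in auto)
  have "det (gblock3 n T) = det (T 0 0) * det L"
    unfolding eq by (rule det_four_block_mat_lower_left_zero[OF c00 U refl L])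
  also have "det L = det (T 1 1) * det (T 2 2)"
    unfolding L_def by (rule det_four_block_mat_lower_left_zero[OF c11 c12 refl c22])
  finally show ?thesis by simp
qed

definition cS :: "nat \<Rightarrow> nat \<Rightarrow> 'a::comm_ring_1" where
  "cS i j = (if i = 0 then (if j = 0 then 1 else 0) else if i = 1 then (if j \<le> 1 then 1 else 0)
     else (if j = 0 then 1 else if j = 1 then 0 else -1))"
definition cSi :: "nat \<Rightarrow> nat \<Rightarrow> 'a::comm_ring_1" where
  "cSi i j = (if i = 0 then (if j = 0 then 1 else 0) else if i = 1 then (if j = 0 then -1 else if j = 1 then 1 else 0)
     else (if j = 0 then 1 else if j = 1 then 0 else -1))"

lemma smult_one_left: "X \<in> carrier_mat n n \<Longrightarrow> (c \<cdot>\<^sub>m 1\<^sub>m n) * X = c \<cdot>\<^sub>m (X :: 'a::comm_ring_1 mat)"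
  using mult_smult_assoc_mat[of "1\<^sub>m n" n n X n c] left_mult_one_mat[of X n n] by simp
lemma smult_one_right: "X \<in> carrier_mat n n \<Longrightarrow> X * (c \<cdot>\<^sub>m 1\<^sub>m n) = c \<cdot>\<^sub>m (X :: 'a::comm_ring_1 mat)"
  using mult_smult_distrib[of X n n "1\<^sub>m n" n c] right_mult_one_mat[of X n n] by simp

lemma left_scal:
  fixes b :: "nat \<Rightarrow> nat \<Rightarrow> 'a::comm_ring_1 mat"
  assumes c: "\<And>i j. i < 3 \<Longrightarrow> j < 3 \<Longrightarrow> b i j \<in> carrier_mat n n"
  shows "gblock3 n (\<lambda>i j. cL i j \<cdot>\<^sub>m 1\<^sub>m n) * gblock3 n b
    = gblock3 n (\<lambda>i j. mat n n (\<lambda>(r,s). cL i 0 * b 0 j $$ (r,s) + cL i 1 * b 1 j $$ (r,s) + cL i 2 * b 2 j $$ (r,s)))"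
proof -
  have "gblock3 n (\<lambda>i j. cL i j \<cdot>\<^sub>m 1\<^sub>m n) * gblock3 n b = gblock3 n (\<lambda>i j. 
     cL i 0 \<cdot>\<^sub>m 1\<^sub>m n * b 0 j + cL i 1 \<cdot>\<^sub>m 1\<^sub>m n * b 1 j + cL i 2 \<cdot>\<^sub>m 1\<^sub>m n * b 2 j)"
    by (rule gblock3_mult, use c in \<open>auto intro!: add_carrier_mat mult_carrier_mat\<close>)
  also have "\<dots> = gblock3 n (\<lambda>i j. mat n n (\<lambda>(r,s). cL i 0 * b 0 j $$ (r,s) + cL i 1 * b 1 j $$ (r,s) + cL i 2 * b 2 j $$ (r,s)))"
  proof (rule gblock3_eqI)
    fix i j r s assume ij: "i < (3::nat)" "j < (3::nat)" "r < n" "s < n"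
    have c0: "b 0 j \<in> carrier_mat n n" "b 1 j \<in> carrier_mat n n" "b 2 j \<in> carrier_mat n n"
      using c ij by auto
    show "(cL i 0 \<cdot>\<^sub>m 1\<^sub>m n * b 0 j + cL i 1 \<cdot>\<^sub>m 1\<^sub>m n * b 1 j + cL i 2 \<cdot>\<^sub>m 1\<^sub>m n * b 2 j) $$ (r,s)
      = mat n n (\<lambda>(r,s). cL i 0 * b 0 j $$ (r,s) + cL i 1 * b 1 j $$ (r,s) + cL i 2 * b 2 j $$ (r,s)) $$ (r,s)"
      unfolding smult_one_left[OF c0(1)] smult_one_left[OF c0(2)] smult_one_left[OF c0(3)]
      using ij c0 by simp
  qed
  finally show ?thesis .
qed

lemma right_scal:
  fixes b :: "nat \<Rightarrow> nat \<Rightarrow> 'a::comm_ring_1 mat"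
  assumes c: "\<And>i j. i < 3 \<Longrightarrow> j < 3 \<Longrightarrow> b i j \<in> carrier_mat n n"
  shows "gblock3 n b * gblock3 n (\<lambda>i j. cR i j \<cdot>\<^sub>m 1\<^sub>m n)
    = gblock3 n (\<lambda>i j. mat n n (\<lambda>(r,s). b i 0 $$ (r,s) * cR 0 j + b i 1 $$ (r,s) * cR 1 j + b i 2 $$ (r,s) * cR 2 j))"
proof -
  have "gblock3 n b * gblock3 n (\<lambda>i j. cR i j \<cdot>\<^sub>m 1\<^sub>m n) = gblock3 n (\<lambda>i j. 
     b i 0 * (cR 0 j \<cdot>\<^sub>m 1\<^sub>m n) + b i 1 * (cR 1 j \<cdot>\<^sub>m 1\<^sub>m n) + b i 2 * (cR 2 j \<cdot>\<^sub>m 1\<^sub>m n))"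
    by (rule gblock3_mult, use c in \<open>auto intro!: add_carrier_mat mult_carrier_mat\<close>)
  also have "\<dots> = gblock3 n (\<lambda>i j. mat n n (\<lambda>(r,s). b i 0 $$ (r,s) * cR 0 j + b i 1 $$ (r,s) * cR 1 j + b i 2 $$ (r,s) * cR 2 j))"
  proof (rule gblock3_eqI)
    fix i j r s assume ij: "i < (3::nat)" "j < (3::nat)" "r < n" "s < n"
    have c0: "b i 0 \<in> carrier_mat n n" "b i 1 \<in> carrier_mat n n" "b i 2 \<in> carrier_mat n n"
      using c ij by auto
    show "(b i 0 * (cR 0 j \<cdot>\<^sub>m 1\<^sub>m n) + b i 1 * (cR 1 j \<cdot>\<^sub>m 1\<^sub>m n) + b i 2 * (cR 2 j \<cdot>\<^sub>m 1\<^sub>m n)) $$ (r,s)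
      = mat n n (\<lambda>(r,s). b i 0 $$ (r,s) * cR 0 j + b i 1 $$ (r,s) * cR 1 j + b i 2 $$ (r,s) * cR 2 j) $$ (r,s)"
      unfolding smult_one_right[OF c0(1)] smult_one_right[OF c0(2)] smult_one_right[OF c0(3)]
      using ij c0 by (simp add: mult.commute)
  qed
  finally show ?thesis .
qed

lemma det_gblock3_transform:
  fixes b :: "nat \<Rightarrow> nat \<Rightarrow> 'a::idom mat"
  assumes c: "\<And>i j. i < 3 \<Longrightarrow> j < 3 \<Longrightarrow> b i j \<in> carrier_mat n n"
    and h1: "\<And>r s. r < n \<Longrightarrow> s < n \<Longrightarrow> b 1 0 $$ (r,s) + b 1 1 $$ (r,s) + b 1 2 $$ (r,s) = b 0 0 $$ (r,s) + b 0 1 $$ (r,s) + b 0 2 $$ (r,s)"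
    and h2: "\<And>r s. r < n \<Longrightarrow> s < n \<Longrightarrow> b 2 0 $$ (r,s) + b 2 1 $$ (r,s) + b 2 2 $$ (r,s) = b 0 0 $$ (r,s) + b 0 1 $$ (r,s) + b 0 2 $$ (r,s)"
    and h3: "\<And>r s. r < n \<Longrightarrow> s < n \<Longrightarrow> b 2 1 $$ (r,s) = b 0 1 $$ (r,s)"
  shows "det (gblock3 n b) = det (b 0 0 + b 0 1 + b 0 2) * det (b 1 1 - b 0 1) * det (b 2 2 - b 0 2)"
proof -
  define SL :: "'a mat" where "SL = gblock3 n (\<lambda>i j. cSi i j \<cdot>\<^sub>m 1\<^sub>m n)"
  define SR :: "'a mat" where "SR = gblock3 n (\<lambda>i j. cS i j \<cdot>\<^sub>m 1\<^sub>m n)"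
  define b1 where "b1 = (\<lambda>i j. mat n n (\<lambda>(r,s). cSi i 0 * b 0 j $$ (r,s) + cSi i 1 * b 1 j $$ (r,s) + cSi i 2 * b 2 j $$ (r,s)))"
  define b2 where "b2 = (\<lambda>i j. mat n n (\<lambda>(r,s). b1 i 0 $$ (r,s) * cS 0 j + b1 i 1 $$ (r,s) * cS 1 j + b1 i 2 $$ (r,s) * cS 2 j))"
  have c1: "b1 i j \<in> carrier_mat n n" for i j unfolding b1_def by auto
  have c2: "b2 i j \<in> carrier_mat n n" for i j unfolding b2_def by auto
  have prod: "SL * gblock3 n b * SR = gblock3 n b2"
    unfolding SL_def SR_def b2_def
    using left_scal[of b n cSi, OF c] right_scal[of b1 n cS] c1
    unfolding b1_def by simp
  have SLSR: "SL * SR = 1\<^sub>m (3*n)"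
  proof -
    have "SL * SR = gblock3 n (\<lambda>i j. mat n n (\<lambda>(r,s). (cSi i 0 \<cdot>\<^sub>m 1\<^sub>m n) $$ (r,s) * cS 0 j + (cSi i 1 \<cdot>\<^sub>m 1\<^sub>m n) $$ (r,s) * cS 1 j + (cSi i 2 \<cdot>\<^sub>m 1\<^sub>m n) $$ (r,s) * cS 2 j))"
      unfolding SL_def SR_def by (rule right_scal, auto)
    also have "\<dots> = gblock3 n (\<lambda>i j. if i = j then 1\<^sub>m n else 0\<^sub>m n n)"
    proof (rule gblock3_eqI)
      fix i j r s assume ij: "i < (3::nat)" "j < (3::nat)" "r < n" "s < n"
      then have "i = 0 \<or> i = 1 \<or> i = 2" "j = 0 \<or> j = 1 \<or> j = 2" by auto
      then show "mat n n (\<lambda>(r,s). (cSi i 0 \<cdot>\<^sub>m 1\<^sub>m n) $$ (r,s) * cS 0 j + (cSi i 1 \<cdot>\<^sub>m 1\<^sub>m n) $$ (r,s) * cS 1 j + (cSi i 2 \<cdot>\<^sub>m 1\<^sub>m n) $$ (r,s) * cS 2 j) $$ (r,s)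
        = (if i = j then 1\<^sub>m n else (0\<^sub>m n n :: 'a mat)) $$ (r,s)"
        using ij by (auto simp: cS_def cSi_def)
    qed
    also have "\<dots> = 1\<^sub>m (3*n)" by (rule gblock3_one)
    finally show ?thesis .
  qed
  have cSL: "SL \<in> carrier_mat (3*n) (3*n)" and cSR: "SR \<in> carrier_mat (3*n) (3*n)"
    unfolding SL_def SR_def by auto
  have cB: "gblock3 n b \<in> carrier_mat (3*n) (3*n)" by simp
  have "det (gblock3 n b2) = det SL * det (gblock3 n b) * det SR"
    unfolding prod[symmetric]
    using cSL cSR cB by (simp add: det_mult[of _ "3*n"])
  also have "\<dots> = det (gblock3 n b) * det (SL * SR)"
    using cSL cSR by (simp add: det_mult[of _ "3*n"])
  also have "\<dots> = det (gblock3 n b)" unfolding SLSR by simp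
  finally have e1: "det (gblock3 n b) = det (gblock3 n b2)" by simp
  have z10: "b2 1 0 = 0\<^sub>m n n"
    by (rule eq_matI, use h1 in \<open>auto simp: b2_def b1_def cS_def cSi_def algebra_simps\<close>)
  have z20: "b2 2 0 = 0\<^sub>m n n"
    by (rule eq_matI, use h2 in \<open>auto simp: b2_def b1_def cS_def cSi_def algebra_simps\<close>)
  have z21: "b2 2 1 = 0\<^sub>m n n"
    by (rule eq_matI, use h3 in \<open>auto simp: b2_def b1_def cS_def cSi_def algebra_simps\<close>)
  have cb: "b 0 0 \<in> carrier_mat n n" "b 0 1 \<in> carrier_mat n n" "b 0 2 \<in> carrier_mat n n"
    "b 1 1 \<in> carrier_mat n n" "b 2 2 \<in> carrier_mat n n" using c by auto
  have d00: "b2 0 0 = b 0 0 + b 0 1 + b 0 2"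
    by (rule eq_matI, use cb in \<open>auto simp: b2_def b1_def cS_def cSi_def algebra_simps\<close>)
  have d11: "b2 1 1 = b 1 1 - b 0 1"
    by (rule eq_matI, use cb in \<open>auto simp: b2_def b1_def cS_def cSi_def algebra_simps\<close>)
  have d22: "b2 2 2 = b 2 2 - b 0 2"
    by (rule eq_matI, use cb in \<open>auto simp: b2_def b1_def cS_def cSi_def algebra_simps\<close>)
  show ?thesis unfolding e1
    using det_gblock3_tri[of b2 n, OF _ z10 z20 z21] c2 d00 d11 d22 by simp
qed

lemma char_gblock3:
  fixes b :: "nat \<Rightarrow> nat \<Rightarrow> real mat"
  assumes c: "\<And>i j. i < 3 \<Longrightarrow> j < 3 \<Longrightarrow> b i j \<in> carrier_mat n n"
  shows "char_matrix (map_mat complex_of_real (gblock3 n b)) e =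
    gblock3 n (\<lambda>i j. map_mat complex_of_real (b i j) + (if i = j then (-e) \<cdot>\<^sub>m 1\<^sub>m n else 0\<^sub>m n n))"
proof (rule eq_matI)
  fix i j assume "i < dim_row (gblock3 n (\<lambda>i j. map_mat complex_of_real (b i j) + (if i = j then (-e) \<cdot>\<^sub>m 1\<^sub>m n else 0\<^sub>m n n)))"
    "j < dim_col (gblock3 n (\<lambda>i j. map_mat complex_of_real (b i j) + (if i = j then (-e) \<cdot>\<^sub>m 1\<^sub>m n else 0\<^sub>m n n)))"
  then have i: "i < 3*n" and j: "j < 3*n" by auto
  then have n: "n > 0" by auto
  have eq: "i = j \<longleftrightarrow> (i div n = j div n \<and> i mod n = j mod n)"
    by (metis div_mult_mod_eq)
  have cc: "b (i div n) (j div n) \<in> carrier_mat n n" using c div3[OF i] div3[OF j] by auto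
  show "char_matrix (map_mat complex_of_real (gblock3 n b)) e $$ (i, j) =
    gblock3 n (\<lambda>i j. map_mat complex_of_real (b i j) + (if i = j then (-e) \<cdot>\<^sub>m 1\<^sub>m n else 0\<^sub>m n n)) $$ (i, j)"
    using i j n cc eq by (auto simp: char_matrix_def gblock3_index)
qed (auto simp: char_matrix_def)

definition clb :: "real mat \<Rightarrow> real mat \<Rightarrow> real mat \<Rightarrow> real mat \<Rightarrow> real mat \<Rightarrow> nat \<Rightarrow> nat \<Rightarrow> real mat" where
  "clb A F G Pb Pu = (\<lambda>i j. if i = 0 then (if j = 0 then A else if j = 1 then F else G)
     else if i = 1 then (if j = 0 then Pb else if j = 1 then A - Pb + F else G)
     else (if j = 0 then Pu else if j = 1 then F else A - Pu + G))"

lemma det_char_gen: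
  assumes A: "A \<in> carrier_mat n n" and F: "F \<in> carrier_mat n n" and G: "G \<in> carrier_mat n n"
    and Pb: "Pb \<in> carrier_mat n n" and Pu: "Pu \<in> carrier_mat n n"
  shows "det (char_matrix (map_mat complex_of_real (gblock3 n (clb A F G Pb Pu))) e) =
    det (map_mat complex_of_real (A + F + G) + (-e) \<cdot>\<^sub>m 1\<^sub>m n) *
    det (map_mat complex_of_real (A - Pb) + (-e) \<cdot>\<^sub>m 1\<^sub>m n) *
    det (map_mat complex_of_real (A - Pu) + (-e) \<cdot>\<^sub>m 1\<^sub>m n)"
proof -
  have c: "clb A F G Pb Pu i j \<in> carrier_mat n n" for i j
    using assms by (auto simp: clb_def)
  define cb where "cb = (\<lambda>i j. map_mat complex_of_real (clb A F G Pb Pu i j) + (if i = j then (-e) \<cdot>\<^sub>m 1\<^sub>m n else 0\<^sub>m n n))"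
  have cc: "cb i j \<in> carrier_mat n n" for i j using c[of i j] by (auto simp: cb_def)
  have "det (char_matrix (map_mat complex_of_real (gblock3 n (clb A F G Pb Pu))) e) = det (gblock3 n cb)"
    unfolding cb_def by (subst char_gblock3, use c in auto)
  also have "\<dots> = det (cb 0 0 + cb 0 1 + cb 0 2) * det (cb 1 1 - cb 0 1) * det (cb 2 2 - cb 0 2)"
    by (rule det_gblock3_transform, use cc assms in \<open>auto simp: cb_def clb_def\<close>)
  also have "cb 0 0 + cb 0 1 + cb 0 2 = map_mat complex_of_real (A + F + G) + (-e) \<cdot>\<^sub>m 1\<^sub>m n"
    by (rule eq_matI, use assms in \<open>auto simp: cb_def clb_def\<close>)
  also have "cb 1 1 - cb 0 1 = map_mat complex_of_real (A - Pb) + (-e) \<cdot>\<^sub>m 1\<^sub>m n"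
    by (rule eq_matI, use assms in \<open>auto simp: cb_def clb_def\<close>)
  also have "cb 2 2 - cb 0 2 = map_mat complex_of_real (A - Pu) + (-e) \<cdot>\<^sub>m 1\<^sub>m n"
    by (rule eq_matI, use assms in \<open>auto simp: cb_def clb_def\<close>)
  finally show ?thesis .
qed

definition lin :: "real mat \<Rightarrow> (nat \<Rightarrow> real) \<Rightarrow> nat \<Rightarrow> real" where
  "lin X u k = (\<Sum>t\<in>{0..<dim_col X}. X $$ (k,t) * u t)"

lemma lin_add: "X \<in> carrier_mat n n \<Longrightarrow> Y \<in> carrier_mat n n \<Longrightarrow> k < n \<Longrightarrow> lin (X + Y) u k = lin X u k + lin Y u k"
  by (simp add: lin_def algebra_simps sum.distrib)
lemma lin_minus: "X \<in> carrier_mat n n \<Longrightarrow> Y \<in> carrier_mat n n \<Longrightarrow> k < n \<Longrightarrow> lin (X - Y) u k = lin X u k - lin Y u k"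
  by (simp add: lin_def algebra_simps sum_subtractf)
lemma lin_zero_mat: "k < n \<Longrightarrow> lin (0\<^sub>m n n) u k = 0"
  by (simp add: lin_def)
lemma lin_diff: "lin X (\<lambda>t. u t - v t) k = lin X u k - lin X v k"
  by (simp add: lin_def algebra_simps sum_subtractf)
lemma lin_zero_vec: "lin X (\<lambda>t. 0) k = 0"
  by (simp add: lin_def)
lemma lin_cong: "X \<in> carrier_mat n n \<Longrightarrow> (\<And>t. t < n \<Longrightarrow> u t = v t) \<Longrightarrow> lin X u k = lin X v k"
  by (simp add: lin_def)
lemma lin_nonneg: "X \<in> carrier_mat n n \<Longrightarrow> nonneg_mat X \<Longrightarrow> k < n \<Longrightarrow> (\<And>t. t < n \<Longrightarrow> u t \<ge> 0) \<Longrightarrow> lin X u k \<ge> 0"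
  unfolding lin_def nonneg_mat_def by (auto intro!: sum_nonneg)

lemma mv_gblock3:
  assumes c: "\<And>i j. i < 3 \<Longrightarrow> j < 3 \<Longrightarrow> b i j \<in> carrier_mat n n"
    and z: "dim_vec z = 3*n" and l: "l < 3" and k: "k < n"
  shows "(gblock3 n b *\<^sub>v z) $ (l*n + k) = lin (b l 0) (\<lambda>t. z $ t) k + lin (b l 1) (\<lambda>t. z $ (n + t)) k + lin (b l 2) (\<lambda>t. z $ (2*n + t)) k"
proof -
  have lk: "l*n + k < 3*n"
  proof -
    have "(l+1)*n \<le> 3*n" using l by (intro mult_le_mono1) auto
    moreover have "l*n + k < l*n + n" using k by simp
    moreover have "l*n + n = (l+1)*n" by simp
    ultimately show ?thesis by linarith
  qed
  have dm: "(l*n + k) div n = l" "(l*n+k) mod n = k" using k by auto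
  have d0: "(n + t) div n = 1" "(n+t) mod n = t" "(2*n + t) div n = 2" "(2*n + t) mod n = t" if "t < n" for t
    using that by auto
  have cl: "b l 0 \<in> carrier_mat n n" "b l 1 \<in> carrier_mat n n" "b l 2 \<in> carrier_mat n n" using c l by auto
  have "(gblock3 n b *\<^sub>v z) $ (l*n + k) = (\<Sum>t\<in>{0..<3*n}. gblock3 n b $$ (l*n+k, t) * z $ t)"
    using lk z by (simp add: scalar_prod_def)
  also have "\<dots> = lin (b l 0) (\<lambda>t. z $ t) k + lin (b l 1) (\<lambda>t. z $ (n + t)) k + lin (b l 2) (\<lambda>t. z $ (2*n + t)) k"
    unfolding sum3_split lin_def using cl lk dm d0
    by (simp add: gblock3_index)
  finally show ?thesis .
qed

lemma mv0: assumes "\<And>i j. i < 3 \<Longrightarrow> j < 3 \<Longrightarrow> b i j \<in> carrier_mat n n" "dim_vec z = 3*n" "k < n"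
  shows "(gblock3 n b *\<^sub>v z) $ k = lin (b 0 0) (\<lambda>t. z $ t) k + lin (b 0 1) (\<lambda>t. z $ (n + t)) k + lin (b 0 2) (\<lambda>t. z $ (2*n + t)) k"
  using mv_gblock3[OF assms(1,2), where l=0 and k=k] assms(3) by simp
lemma mv1: assumes "\<And>i j. i < 3 \<Longrightarrow> j < 3 \<Longrightarrow> b i j \<in> carrier_mat n n" "dim_vec z = 3*n" "k < n"
  shows "(gblock3 n b *\<^sub>v z) $ (n + k) = lin (b 1 0) (\<lambda>t. z $ t) k + lin (b 1 1) (\<lambda>t. z $ (n + t)) k + lin (b 1 2) (\<lambda>t. z $ (2*n + t)) k"
  using mv_gblock3[OF assms(1,2), where l=1 and k=k] assms(3) by simp
lemma mv2: assumes "\<And>i j. i < 3 \<Longrightarrow> j < 3 \<Longrightarrow> b i j \<in> carrier_mat n n" "dim_vec z = 3*n" "k < n"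
  shows "(gblock3 n b *\<^sub>v z) $ (2*n + k) = lin (b 2 0) (\<lambda>t. z $ t) k + lin (b 2 1) (\<lambda>t. z $ (n + t)) k + lin (b 2 2) (\<lambda>t. z $ (2*n + t)) k"
  using mv_gblock3[OF assms(1,2), where l=2 and k=k] assms(3) by simp

definition join3 :: "nat \<Rightarrow> (nat \<Rightarrow> real) \<Rightarrow> (nat \<Rightarrow> real) \<Rightarrow> (nat \<Rightarrow> real) \<Rightarrow> real vec" where
  "join3 n u0 u1 u2 = vec (3*n) (\<lambda>i. if i < n then u0 i else if i < 2*n then u1 (i - n) else u2 (i - 2*n))"

lemma join3_simps: "t < n \<Longrightarrow> join3 n u0 u1 u2 $ t = u0 t"
  "t < n \<Longrightarrow> join3 n u0 u1 u2 $ (n + t) = u1 t"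
  "t < n \<Longrightarrow> join3 n u0 u1 u2 $ (2*n + t) = u2 t"
  "dim_vec (join3 n u0 u1 u2) = 3*n"
  by (auto simp: join3_def)

lemma join3_Xset: "(\<And>t. t < n \<Longrightarrow> 0 \<le> u2 t \<and> u2 t \<le> u0 t \<and> u0 t \<le> u1 t) \<Longrightarrow> join3 n u0 u1 u2 \<in> Xset n"
  unfolding Xset_def join3_simps(4) 
proof (intro CollectI conjI allI impI refl)
  fix i assume "i < n" "\<And>t. t < n \<Longrightarrow> 0 \<le> u2 t \<and> u2 t \<le> u0 t \<and> u0 t \<le> u1 t"
  then have h: "0 \<le> u2 i" "u2 i \<le> u0 i" "u0 i \<le> u1 i" by auto
  show "0 \<le> join3 n u0 u1 u2 $ i" using h \<open>i < n\<close> by (simp add: join3_simps)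
  show "0 \<le> join3 n u0 u1 u2 $ (n + i)" using h \<open>i < n\<close> by (simp add: join3_simps)
  show "0 \<le> join3 n u0 u1 u2 $ (2*n + i)" using h \<open>i < n\<close> by (simp add: join3_simps)
  show "join3 n u0 u1 u2 $ (2*n + i) \<le> join3 n u0 u1 u2 $ i" using h \<open>i < n\<close> by (simp add: join3_simps)
  show "join3 n u0 u1 u2 $ i \<le> join3 n u0 u1 u2 $ (n + i)" using h \<open>i < n\<close> by (simp add: join3_simps)
qed (simp add: join3_simps)

lemma lin_j: assumes "X \<in> carrier_mat n n"
  shows "lin X (\<lambda>t. join3 n u0 u1 u2 $ t) k = lin X u0 k"
    "lin X (\<lambda>t. join3 n u0 u1 u2 $ (n + t)) k = lin X u1 k"
    "lin X (\<lambda>t. join3 n u0 u1 u2 $ (2*n + t)) k = lin X u2 k"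
  by (rule lin_cong[OF assms], simp add: join3_simps)+

lemma inv_transfer:
  assumes A: "A \<in> carrier_mat n n" and F: "F \<in> carrier_mat n n" and G: "G \<in> carrier_mat n n"
    and Pb: "Pb \<in> carrier_mat n n" and Pu: "Pu \<in> carrier_mat n n"
    and An: "nonneg_mat A" and Pun: "nonneg_mat Pu"
    and step: "\<And>w. w \<in> Xset n \<Longrightarrow> gblock3 n (clb A F G Pb Pu) *\<^sub>v w \<in> Xset n"
    and z: "z \<in> Xset n"
  shows "gblock3 n (clb A (0\<^sub>m n n) (F + G) Pb Pu) *\<^sub>v z \<in> Xset n"
proof -
  define x where "x = (\<lambda>t. z $ t)"
  define xb where "xb = (\<lambda>t. z $ (n + t))"
  define xu where "xu = (\<lambda>t. z $ (2*n + t))"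
  have dz: "dim_vec z = 3*n" using z by (simp add: Xset_def)
  have zc: "0 \<le> xu t" "xu t \<le> x t" "x t \<le> xb t" "0 \<le> x t" "0 \<le> xb t" if "t < n" for t
    using z that by (auto simp: Xset_def x_def xb_def xu_def)
  let ?M = "gblock3 n (clb A F G Pb Pu)"
  have cM: "clb A F G Pb Pu i j \<in> carrier_mat n n" for i j using assms by (auto simp: clb_def)
  have cM': "clb A (0\<^sub>m n n) (F + G) Pb Pu i j \<in> carrier_mat n n" for i j using assms by (auto simp: clb_def)
  have inX: "\<And>w k. w \<in> Xset n \<Longrightarrow> k < n \<Longrightarrow> 0 \<le> (?M *\<^sub>v w) $ k \<and> (?M *\<^sub>v w) $ (2*n+k) \<le> (?M *\<^sub>v w) $ k
      \<and> (?M *\<^sub>v w) $ k \<le> (?M *\<^sub>v w) $ (n+k)"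
    using step unfolding Xset_def by blast
  have cAPb: "A - Pb \<in> carrier_mat n n" and cAPu: "A - Pu \<in> carrier_mat n n" and cFG: "F + G \<in> carrier_mat n n"
    using A Pb Pu F G by auto
  show ?thesis unfolding Xset_def
  proof (intro CollectI conjI allI impI)
    show "dim_vec (gblock3 n (clb A (0\<^sub>m n n) (F + G) Pb Pu) *\<^sub>v z) = 3 * n" by simp
    fix k assume k: "k < n"
    have f1: "lin A xu k + lin F xu k + lin G xu k \<ge> 0"
    proof -
      have w: "join3 n xu xu xu \<in> Xset n" by (rule join3_Xset, use zc in auto)
      from inX[OF w k] have "0 \<le> (?M *\<^sub>v join3 n xu xu xu) $ k" by blast
      then show ?thesis
        using k cAPb cAPu cFG A F G by (simp only: mv0[OF cM join3_simps(4) k], simp add: join3_simps lin_j clb_def)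
    qed
    have f2: "lin A xb k - lin A x k - lin Pb xb k + lin Pb x k \<ge> 0"
    proof -
      have w: "join3 n (\<lambda>_. 0) (\<lambda>t. xb t - x t) (\<lambda>_. 0) \<in> Xset n" by (rule join3_Xset, use zc in auto)
      from inX[OF w k] have "(?M *\<^sub>v join3 n (\<lambda>_. 0) (\<lambda>t. xb t - x t) (\<lambda>_. 0)) $ k \<le> (?M *\<^sub>v join3 n (\<lambda>_. 0) (\<lambda>t. xb t - x t) (\<lambda>_. 0)) $ (n + k)" by blast
      then show ?thesis
        using k cAPb cAPu cFG A F G Pb by (simp only: mv0[OF cM join3_simps(4) k] mv1[OF cM join3_simps(4) k], simp add: join3_simps lin_j clb_def lin_add lin_minus lin_diff lin_zero_vec)
    qed
    have f3: "lin A x k - lin A xu k - lin Pu x k + lin Pu xu k \<ge> 0"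
    proof -
      have w: "join3 n (\<lambda>t. x t - xu t) (\<lambda>t. x t - xu t) (\<lambda>_. 0) \<in> Xset n" by (rule join3_Xset, use zc in auto)
      from inX[OF w k] have "(?M *\<^sub>v join3 n (\<lambda>t. x t - xu t) (\<lambda>t. x t - xu t) (\<lambda>_. 0)) $ (2*n+k) \<le> (?M *\<^sub>v join3 n (\<lambda>t. x t - xu t) (\<lambda>t. x t - xu t) (\<lambda>_. 0)) $ k" by blast
      then show ?thesis
        using k cAPb cAPu cFG A F G Pu by (simp only: mv0[OF cM join3_simps(4) k] mv2[OF cM join3_simps(4) k], simp add: join3_simps lin_j clb_def lin_add lin_minus lin_diff lin_zero_vec)
    qed
    have f4: "lin A x k - lin A xu k \<ge> 0"
      using lin_nonneg[OF A An k, of "\<lambda>t. x t - xu t"] zc by (simp add: lin_diff)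
    have f5: "lin Pu x k - lin Pu xu k \<ge> 0"
      using lin_nonneg[OF Pu Pun k, of "\<lambda>t. x t - xu t"] zc by (simp add: lin_diff)
    let ?M' = "gblock3 n (clb A (0\<^sub>m n n) (F + G) Pb Pu)"
    have e0: "(?M' *\<^sub>v z) $ k = lin A x k + lin F xu k + lin G xu k"
      using k cAPb cAPu cFG A F G by (simp only: mv0[OF cM' dz k], simp add: clb_def lin_add lin_zero_mat x_def xb_def xu_def)
    have e1: "(?M' *\<^sub>v z) $ (n + k) = lin Pb x k + lin A xb k - lin Pb xb k + lin F xu k + lin G xu k"
      using k cAPb cAPu cFG A F G Pb by (simp only: mv1[OF cM' dz k], simp add: clb_def lin_add lin_minus lin_zero_mat x_def xb_def xu_def)
    have e2: "(?M' *\<^sub>v z) $ (2*n + k) = lin Pu x k + lin A xu k - lin Pu xu k + lin F xu k + lin G xu k"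
      using k cAPb cAPu cFG A F G Pu by (simp only: mv2[OF cM' dz k], simp add: clb_def lin_add lin_minus lin_zero_mat x_def xb_def xu_def)
    show "0 \<le> (?M' *\<^sub>v z) $ k" unfolding e0 using f1 f4 by linarith
    show "0 \<le> (?M' *\<^sub>v z) $ (n + k)" unfolding e1 using f1 f2 f4 by linarith
    show "0 \<le> (?M' *\<^sub>v z) $ (2*n + k)" unfolding e2 using f1 f5 by linarith
    show "(?M' *\<^sub>v z) $ (2*n + k) \<le> (?M' *\<^sub>v z) $ k" unfolding e0 e2 using f3 by linarith
    show "(?M' *\<^sub>v z) $ k \<le> (?M' *\<^sub>v z) $ (n + k)" unfolding e0 e1 using f2 by linarith
  qed
qed

lemma Xset_dim: "z \<in> Xset n \<Longrightarrow> z \<in> carrier_vec (3*n)"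
proof -
  assume "z \<in> Xset n"
  then have "dim_vec z = 3*n" unfolding Xset_def by blast
  then show ?thesis by (rule carrier_vecI)
qed

lemma pow_step: assumes M: "M \<in> carrier_mat k k" and z: "z \<in> carrier_vec k"
  shows "(M ^\<^sub>m Suc t) *\<^sub>v z = (M ^\<^sub>m t) *\<^sub>v (M *\<^sub>v (z :: real vec))"
proof -
  have Pc: "M ^\<^sub>m t \<in> carrier_mat k k" using M by (intro carrier_matI) auto
  have e: "(M ^\<^sub>m Suc t) = M ^\<^sub>m t * M" by (rule pow_mat.simps(2))
  show ?thesis unfolding e by (rule assoc_mult_mat_vec[OF Pc M z])
qed

lemma pow_zero: assumes M: "M \<in> carrier_mat k k" and z: "z \<in> carrier_vec k"
  shows "(M ^\<^sub>m 0) *\<^sub>v z = (z :: real vec)"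
proof -
  have "M ^\<^sub>m 0 = 1\<^sub>m (dim_row M)" by (rule pow_mat.simps(1))
  also have "dim_row M = k" by (rule carrier_matD(1)[OF M])
  finally show ?thesis using one_mult_mat_vec[OF z] by (simp only:)
qed

lemma inv_from_step:
  assumes M: "M \<in> carrier_mat (3*n) (3*n)" and st: "\<And>w. w \<in> Xset n \<Longrightarrow> M *\<^sub>v w \<in> Xset n"
  shows "invariant_under M (Xset n)"
proof -
  have "(M ^\<^sub>m t) *\<^sub>v z \<in> Xset n" if "z \<in> Xset n" for t z
    using that
  proof (induction t arbitrary: z)
    case 0
    show ?case unfolding pow_zero[OF M Xset_dim[OF 0]] by (rule 0)
  next
    case (Suc t)
    show ?case unfolding pow_step[OF M Xset_dim[OF Suc.prems]]
      by (rule Suc.IH, rule st, rule Suc.prems)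
  qed
  then show ?thesis unfolding invariant_under_def by blast
qed

lemma step_from_inv:
  assumes M: "M \<in> carrier_mat (3*n) (3*n)" and inv: "invariant_under M (Xset n)" and w: "w \<in> Xset n"
  shows "M *\<^sub>v w \<in> Xset n"
proof -
  have "\<forall>t::nat. (M ^\<^sub>m t) *\<^sub>v w \<in> Xset n" using inv w unfolding invariant_under_def by (rule bspec)
  then have a: "(M ^\<^sub>m 1) *\<^sub>v w \<in> Xset n" by (rule spec)
  have e: "M ^\<^sub>m 1 = M" using M by (simp add: left_mult_one_mat)
  from e a show ?thesis by (rule subst[where P="\<lambda>X. X *\<^sub>v w \<in> Xset n"])
qed

lemma spectrum_eq_det:
  fixes M1 M2 :: "complex mat"
  assumes "M1 \<in> carrier_mat k k" "M2 \<in> carrier_mat k k"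
    and "\<And>e. det (char_matrix M1 e) = det (char_matrix M2 e)"
  shows "spectrum M1 = spectrum M2"
  unfolding spectrum_def using eigenvalue_det[OF assms(1)] eigenvalue_det[OF assms(2)] assms(3) by auto

theorem corollary1:
  fixes n m p :: nat and A B C :: "real mat"
  assumes A: "A \<in> carrier_mat n n" and A_nonneg: "nonneg_mat A"
    and B: "B \<in> carrier_mat n m" and C: "C \<in> carrier_mat p n"
    and ex: "\<exists>Kb Ku Lb Lu. Kb \<in> carrier_mat m n \<and> Ku \<in> carrier_mat m n \<and>
               Lb \<in> carrier_mat n p \<and> Lu \<in> carrier_mat n p \<and>
               nonneg_mat (Lu * C) \<and> schur (closed_loop n A B C Kb Ku Lb Lu) \<and>
               invariant_under (closed_loop n A B C Kb Ku Lb Lu) (Xset n)"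
  shows "\<exists>Ku' Lb' Lu'. Ku' \<in> carrier_mat m n \<and>
               Lb' \<in> carrier_mat n p \<and> Lu' \<in> carrier_mat n p \<and>
               nonneg_mat (Lu' * C) \<and> schur (closed_loop n A B C (0\<^sub>m m n) Ku' Lb' Lu') \<and>
               invariant_under (closed_loop n A B C (0\<^sub>m m n) Ku' Lb' Lu') (Xset n)"
proof -
  obtain Kb Ku Lb Lu where Kb: "Kb \<in> carrier_mat m n" and Ku: "Ku \<in> carrier_mat m n"
    and Lb: "Lb \<in> carrier_mat n p" and Lu: "Lu \<in> carrier_mat n p"
    and Pun: "nonneg_mat (Lu * C)" and sch: "schur (closed_loop n A B C Kb Ku Lb Lu)"
    and inv: "invariant_under (closed_loop n A B C Kb Ku Lb Lu) (Xset n)"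
    using ex by blast
  define F where "F = B * Kb"
  define G where "G = B * Ku"
  define Pb where "Pb = Lb * C"
  define Pu where "Pu = Lu * C"
  have cF: "F \<in> carrier_mat n n" and cG: "G \<in> carrier_mat n n" and cPb: "Pb \<in> carrier_mat n n"
    and cPu: "Pu \<in> carrier_mat n n"
    unfolding F_def G_def Pb_def Pu_def using B C Kb Ku Lb Lu by auto
  have M1: "closed_loop n A B C Kb Ku Lb Lu = gblock3 n (clb A F G Pb Pu)"
    unfolding closed_loop_def block3_gblock3 clb_def F_def G_def Pb_def Pu_def ..
  have z: "B * 0\<^sub>m m n = 0\<^sub>m n n" using B by simp
  have d: "B * (Kb + Ku) = F + G" unfolding F_def G_def using B Kb Ku by (simp add: mult_add_distrib_mat)
  have M2: "closed_loop n A B C (0\<^sub>m m n) (Kb + Ku) Lb Lu = gblock3 n (clb A (0\<^sub>m n n) (F + G) Pb Pu)"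
    unfolding closed_loop_def block3_gblock3 clb_def z d Pb_def Pu_def ..
  have zc: "0\<^sub>m n n \<in> carrier_mat n n" and cFG: "F + G \<in> carrier_mat n n" using cF cG by auto
  have AFG: "A + 0\<^sub>m n n + (F + G) = A + F + G" using A cF cG by (intro eq_matI) auto
  have spec: "spectrum (map_mat complex_of_real (closed_loop n A B C (0\<^sub>m m n) (Kb + Ku) Lb Lu))
      = spectrum (map_mat complex_of_real (closed_loop n A B C Kb Ku Lb Lu))"
  proof (rule spectrum_eq_det)
    show "map_mat complex_of_real (closed_loop n A B C (0\<^sub>m m n) (Kb + Ku) Lb Lu) \<in> carrier_mat (3*n) (3*n)"
      unfolding M2 by simp
    show "map_mat complex_of_real (closed_loop n A B C Kb Ku Lb Lu) \<in> carrier_mat (3*n) (3*n)"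
      unfolding M1 by simp
    fix e
    show "det (char_matrix (map_mat complex_of_real (closed_loop n A B C (0\<^sub>m m n) (Kb + Ku) Lb Lu)) e) =
          det (char_matrix (map_mat complex_of_real (closed_loop n A B C Kb Ku Lb Lu)) e)"
      unfolding M1 M2 det_char_gen[OF A cF cG cPb cPu] det_char_gen[OF A zc cFG cPb cPu] AFG ..
  qed
  have sch2: "schur (closed_loop n A B C (0\<^sub>m m n) (Kb + Ku) Lb Lu)"
    using sch unfolding schur_def spectral_radius_def spec .
  have cM1: "closed_loop n A B C Kb Ku Lb Lu \<in> carrier_mat (3*n) (3*n)" unfolding M1 by simp
  have cM2: "closed_loop n A B C (0\<^sub>m m n) (Kb + Ku) Lb Lu \<in> carrier_mat (3*n) (3*n)" unfolding M2 by simp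
  have inv2: "invariant_under (closed_loop n A B C (0\<^sub>m m n) (Kb + Ku) Lb Lu) (Xset n)"
  proof (rule inv_from_step[OF cM2])
    fix w assume w: "w \<in> Xset n"
    have st: "\<And>w. w \<in> Xset n \<Longrightarrow> gblock3 n (clb A F G Pb Pu) *\<^sub>v w \<in> Xset n"
      using step_from_inv[OF cM1 inv] unfolding M1 .
    show "closed_loop n A B C (0\<^sub>m m n) (Kb + Ku) Lb Lu *\<^sub>v w \<in> Xset n"
      unfolding M2 by (rule inv_transfer[OF A cF cG cPb cPu A_nonneg Pun[folded Pu_def] st w])
  qed
  show ?thesis
    using Lb Lu Pun sch2 inv2 Kb Ku by (intro exI[of _ "Kb + Ku"] exI[of _ Lb] exI[of _ Lu]) auto
qed


end
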